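(* Let $\rho$ be the automorphism of $\mathcal A_\theta^{alg}$ with $\rho\cdot U_1=U_2^{-1}$, $\rho\cdot U_2=U_1$, and let $H^0(\mathcal A_\theta^{alg},{}_{\rho}\mathcal A_\theta^{alg\ast})$ be the space of formal series $\varphi=\sum\varphi_{n,m}U_1^nU_2^m$ with $(\rho\cdot a)\varphi=\varphi a$ for all $a\in\mathcal A_\theta^{alg}$. Then every such $\varphi$ is determined by the two coefficients $\varphi_{0,0},\varphi_{0,1}$ (which generate the space), and: if $m+n\equiv0\pmod2$ then $\varphi_{n,m}=\lambda^{\frac{m^2+n^2+2mn}{4}}\varphi_{0,0}$; if $m+n\equiv1\pmod 2$ then $\varphi_{n,m}=\lambda^{\frac{m^2+n^2+2mn-1}{4}}\varphi_{0,1}$.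
   Context: Let $\theta\in\mathbb R\setminus\mathbb Q$, $\lambda=e^{2\pi i\theta}$, $\lambda^s:=e^{2\pi i\theta s}$. $\mathcal A_\theta^{alg}$ is the complex algebra of finite sums $\sum a_{n,m}U_1^nU_2^m$ with $U_1,U_2$ invertible and $U_2U_1=\lambda U_1U_2$; formal series $\sum_{(n,m)\in\mathbb Z^2}\varphi_{n,m}U_1^nU_2^m$ with arbitrary coefficients form an $\mathcal A_\theta^{alg}$-bimodule via left/right multiplication. The automorphism $\rho$ generates the copy of $\mathbb Z_4\subset SL(2,\mathbb Z)$ acting on $\mathcal A_\theta^{alg}$ (the paper denotes it $i$). *)

theory Defs
  imports Complex_Main
begin

text \<open>lam theta s = lambda^s = exp(2 pi i theta s).\<close>
definition lam :: "real \<Rightarrow> real \<Rightarrow> complex" where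
  "lam \<theta> s = cis (2 * pi * \<theta> * s)"

text \<open>Coefficient functions (n,m) -> coefficient of U1^n U2^m.
  Elements of A_theta^alg are those with finite support; formal series are arbitrary.\<close>
type_synonym coeffs = "int \<Rightarrow> int \<Rightarrow> complex"

definition supp2 :: "coeffs \<Rightarrow> (int \<times> int) set" where
  "supp2 a = {(n, m). a n m \<noteq> 0}"

definition is_alg :: "coeffs \<Rightarrow> bool" where
  "is_alg a \<longleftrightarrow> finite (supp2 a)"

text \<open>Left action a * phi, using U1^n U2^m U1^p U2^q = lambda^(m p) U1^(n+p) U2^(m+q).\<close>
definition lmult :: "real \<Rightarrow> coeffs \<Rightarrow> coeffs \<Rightarrow> coeffs" where
  "lmult \<theta> a \<phi> = (\<lambda>N M. \<Sum>(n, m)\<in>supp2 a.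
      a n m * lam \<theta> (of_int (m * (N - n))) * \<phi> (N - n) (M - m))"

definition rmult :: "real \<Rightarrow> coeffs \<Rightarrow> coeffs \<Rightarrow> coeffs" where
  "rmult \<theta> \<phi> a = (\<lambda>N M. \<Sum>(p, q)\<in>supp2 a.
      \<phi> (N - p) (M - q) * a p q * lam \<theta> (of_int ((M - q) * p)))"

text \<open>The automorphism rho with rho U1 = U2^-1, rho U2 = U1:
  rho(U1^n U2^m) = U2^-n U1^m = lambda^(-n m) U1^m U2^-n.\<close>
definition rho :: "real \<Rightarrow> coeffs \<Rightarrow> coeffs" where
  "rho \<theta> a = (\<lambda>p q. lam \<theta> (of_int (q * p)) * a (- q) p)"

definition H0_rho :: "real \<Rightarrow> coeffs set" where
  "H0_rho \<theta> = {\<phi>. \<forall>a. is_alg a \<longrightarrow> lmult \<theta> (rho \<theta> a) \<phi> = rmult \<theta> \<phi> a}"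

end

theory Submission
  imports Defs
begin

lemma lam_add: "lam t (a + b) = lam t a * lam t b"
  unfolding lam_def by (simp add: cis_mult distrib_left)

lemma lam_0: "lam t 0 = 1"
  unfolding lam_def by simp

lemma lam_nz: "lam t x \<noteq> 0"
  unfolding lam_def by simp

lemma lam_cong: "a = b \<Longrightarrow> lam t a = lam t b" by simp

definition dl :: "int \<Rightarrow> int \<Rightarrow> coeffs" where
  "dl p q = (\<lambda>i j. if i = p \<and> j = q then 1 else 0)"

lemma supp_dl: "supp2 (dl p q) = {(p,q)}"
  unfolding supp2_def dl_def by auto

lemma alg_dl: "is_alg (dl p q)"
  unfolding is_alg_def supp_dl by simp

lemma rho_dl: "rho t (dl p q) = (\<lambda>i j. if i = q \<and> j = -p then lam t (of_int (-p*q)) else 0)"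
  unfolding rho_def dl_def by (auto intro!: ext simp: mult.commute)

lemma supp_rho_dl: "supp2 (rho t (dl p q)) = {(q,-p)}"
  unfolding rho_dl supp2_def using lam_nz by auto

lemma cond:
  assumes "\<phi> \<in> H0_rho t"
  shows "lam t (of_int (-(p*N))) * \<phi> (N-q) (M+p) = lam t (of_int (p*(M-q))) * \<phi> (N-p) (M-q)"
proof -
  have "lmult t (rho t (dl p q)) \<phi> N M = rmult t \<phi> (dl p q) N M"
    using assms alg_dl unfolding H0_rho_def by auto
  hence "lam t (of_int (-p*q)) * lam t (of_int (-p*(N-q))) * \<phi> (N-q) (M+p)
      = \<phi> (N-p) (M-q) * lam t (of_int ((M-q)*p))"
    unfolding lmult_def rmult_def supp_rho_dl supp_dl by (simp add: rho_def dl_def)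
  moreover have "lam t (of_int (-p*q)) * lam t (of_int (-p*(N-q))) = lam t (of_int (-(p*N)))"
    by (subst lam_add[symmetric], rule lam_cong) (simp add: algebra_simps)
  ultimately show ?thesis by (simp add: mult.commute)
qed

definition ff :: "real \<Rightarrow> complex \<Rightarrow> complex \<Rightarrow> int \<Rightarrow> complex" where
  "ff t c0 c1 k = (if even k then lam t (of_int (k^2) / 4) * c0 else lam t (of_int (k^2 - 1) / 4) * c1)"

lemma ff_shift: "ff t c0 c1 (k + 2*p) = lam t (of_int (p*(k+p))) * ff t c0 c1 k"
proof (cases "even k")
  case True
  have "lam t (of_int ((k+2*p)^2) / 4) = lam t (of_int (k^2)/4 + of_int (p*(k+p)))"
    by (rule lam_cong) (simp add: power2_eq_square algebra_simps)
  then show ?thesis using True unfolding ff_def by (simp add: lam_add)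
next
  case False
  have "lam t (of_int ((k+2*p)^2 - 1) / 4) = lam t (of_int (k^2 - 1)/4 + of_int (p*(k+p)))"
    by (rule lam_cong) (simp add: power2_eq_square algebra_simps field_simps)
  then show ?thesis using False unfolding ff_def by (simp add: lam_add)
qed

lemma exist: "(\<lambda>n m. ff t c0 c1 (n+m)) \<in> H0_rho t"
proof -
  let ?f = "\<lambda>n m. ff t c0 c1 (n+m)"
  have "lmult t (rho t a) ?f = rmult t ?f a" for a
  proof (intro ext)
    fix N M
    have s: "supp2 (rho t a) = (\<lambda>(p,q). (q,-p)) ` supp2 a"
      unfolding supp2_def rho_def using lam_nz by (force simp: image_iff)
    have inj: "inj_on (\<lambda>(p,q). (q,-p)) (supp2 a)"
      by (auto simp: inj_on_def)
    have "lmult t (rho t a) ?f N M = (\<Sum>(p,q)\<in>supp2 a.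
        rho t a q (-p) * lam t (of_int (-p*(N-q))) * ?f (N-q) (M+p))"
      unfolding lmult_def s by (subst sum.reindex[OF inj]) (simp add: case_prod_unfold)
    also have "\<dots> = (\<Sum>(p,q)\<in>supp2 a. ?f (N-p) (M-q) * a p q * lam t (of_int ((M-q)*p)))"
    proof (rule sum.cong, simp, clarify)
      fix p q
      have e: "N - q + (M + p) = (N - p + (M - q)) + 2*p" by simp
      have l: "lam t (of_int (-q*p)) * lam t (of_int (-p*(N-q))) * lam t (of_int (p*((N - p + (M - q))+p)))
          = lam t (of_int ((M-q)*p))"
        by (subst lam_add[symmetric])+ (rule lam_cong, simp add: algebra_simps)
      show "rho t a q (-p) * lam t (of_int (-p*(N-q))) * ?f (N-q) (M+p)
          = ?f (N-p) (M-q) * a p q * lam t (of_int ((M-q)*p))"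
        unfolding e ff_shift rho_def using l
        by (simp add: mult.commute mult.left_commute mult.assoc)
    qed
    also have "\<dots> = rmult t ?f a N M" unfolding rmult_def by simp
    finally show "lmult t (rho t a) ?f N M = rmult t ?f a N M" .
  qed
  thus ?thesis unfolding H0_rho_def by auto
qed

lemma aux2: "(l::complex) \<noteq> 0 \<Longrightarrow> L*l = r \<Longrightarrow> l*x = r*y \<Longrightarrow> x = L*y"
proof -
  assume a: "l \<noteq> 0" "L*l = r" "l*x = r*y"
  hence "l*x = l*(L*y)" by (simp add: mult.commute mult.left_commute)
  thus ?thesis using a(1) by simp
qed

theorem mainTheorem5:
  fixes \<theta> :: real
  assumes "\<theta> \<notin> \<rat>"
  shows "(\<forall>c0 c1. \<exists>\<phi>\<in>H0_rho \<theta>. \<phi> 0 0 = c0 \<and> \<phi> 0 1 = c1)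
    \<and> (\<forall>\<phi>\<in>H0_rho \<theta>. \<forall>n m :: int.
        (even (m + n) \<longrightarrow>
           \<phi> n m = lam \<theta> (of_int (m^2 + n^2 + 2*m*n) / 4) * \<phi> 0 0)
      \<and> (odd (m + n) \<longrightarrow>
           \<phi> n m = lam \<theta> (of_int (m^2 + n^2 + 2*m*n - 1) / 4) * \<phi> 0 1))"
proof (intro conjI allI ballI impI)
  fix c0 c1
  show "\<exists>\<phi>\<in>H0_rho \<theta>. \<phi> 0 0 = c0 \<and> \<phi> 0 1 = c1"
    by (rule bexI[OF _ exist]) (simp add: ff_def lam_0)
next
  fix \<phi> and n m :: int assume h: "\<phi> \<in> H0_rho \<theta>" and ev: "even (m+n)"
  then obtain N :: int where N: "m + n = 2*N" by (metis evenE)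
  define M where "M = N - n"
  have c: "lam \<theta> (of_int (-(N*N))) * \<phi> (N-M) (M+N) = lam \<theta> (of_int (N*(M-M))) * \<phi> (N-N) (M-M)"
    using cond[OF h, of N N M] by simp
  have "N - M = n" "M + N = m" using N M_def by auto
  hence c': "lam \<theta> (of_int (-(N*N))) * \<phi> n m = \<phi> 0 0" using c by (simp add: lam_0)
  have LL: "lam \<theta> (of_int (m^2 + n^2 + 2*m*n) / 4) * lam \<theta> (of_int (-(N*N))) = 1"
  proof -
    have i: "m^2 + n^2 + 2*m*n = 4*(N*N)"
    proof -
      have "m^2 + n^2 + 2*m*n = (m+n)^2" by (simp add: power2_eq_square algebra_simps)
      also have "\<dots> = 4*(N*N)" unfolding N by (simp add: power2_eq_square)
      finally show ?thesis .
    qed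
    have "real_of_int (m^2 + n^2 + 2*m*n) / 4 + real_of_int (-(N*N)) = 0"
      unfolding i by simp
    thus ?thesis by (subst lam_add[symmetric]) (simp add: lam_0)
  qed
  show "\<phi> n m = lam \<theta> (of_int (m^2 + n^2 + 2*m*n) / 4) * \<phi> 0 0"
    by (rule aux2[OF lam_nz LL]) (use c' in simp)
next
  fix \<phi> and n m :: int assume h: "\<phi> \<in> H0_rho \<theta>" and od: "odd (m+n)"
  then obtain N :: int where N: "m + n = 2*N + 1" by (metis oddE)
  define M where "M = N - n + 1"
  have c: "lam \<theta> (of_int (-(N*N))) * \<phi> (N-(M-1)) (M+N) = lam \<theta> (of_int (N*(M-(M-1)))) * \<phi> (N-N) (M-(M-1))"
    using cond[OF h, of N N "M-1" M] by simp
  have "N - (M-1) = n" "M + N = m" using N M_def by auto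
  hence c': "lam \<theta> (of_int (-(N*N))) * \<phi> n m = lam \<theta> (of_int N) * \<phi> 0 1" using c by simp
  have "lam \<theta> (of_int (m^2 + n^2 + 2*m*n - 1) / 4) * lam \<theta> (of_int (-(N*N))) = lam \<theta> (of_int N)"
  proof -
    have i: "m^2 + n^2 + 2*m*n - 1 = 4*(N*N) + 4*N"
    proof -
      have "m^2 + n^2 + 2*m*n - 1 = (m+n)^2 - 1" by (simp add: power2_eq_square algebra_simps)
      also have "\<dots> = 4*(N*N) + 4*N" unfolding N by (simp add: power2_eq_square algebra_simps)
      finally show ?thesis .
    qed
    have "real_of_int (m^2 + n^2 + 2*m*n - 1) / 4 + real_of_int (-(N*N)) = real_of_int N"
    proof -
      have "real_of_int (4*(N*N) + 4*N) / 4 = real_of_int (N*N) + real_of_int N" by simp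
      thus ?thesis unfolding i by (simp only: of_int_minus)
    qed
    thus ?thesis by (subst lam_add[symmetric]) simp
  qed
  then show "\<phi> n m = lam \<theta> (of_int (m^2 + n^2 + 2*m*n - 1) / 4) * \<phi> 0 1"
    using c' by (rule aux2[OF lam_nz])
qed

end
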